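(* Let $d\geq 1$, let $p=p_d=\frac{2d+1}{4d}$, let $(S_n)$ be the $d$-dimensional elephant random walk with memory parameter $p$, and let $G_n=\frac{1}{n}\sum_{k=1}^n S_k$. Then $$\lim_{n\to\infty}\frac{1}{\sqrt{n}\log n}G_n=0\quad\text{a.s.}$$
   Context: The $d$-dimensional elephant random walk (ERW) with memory parameter $p\in[0,1]$ is defined as follows. Let $e_1,\dots,e_d$ be the standard basis of $\mathbb{R}^d$; the $2d$ directions are $\pm e_1,\dots,\pm e_d$. Set $S_0=0$. The first step $X_1$ is uniformly distributed on the $2d$ directions. For $n\geq 1$, given $X_1,\dots,X_n$, an index $k$ is chosen uniformly at random in $\{1,\dots,n\}$, and then $X_{n+1}=X_k$ with probability $p$, while $X_{n+1}$ equals each of the $2d-1$ remaining directions with probability $(1-p)/(2d-1)$. The position is $S_{n+1}=S_n+X_{n+1}$. The case $p=p_d$ is the critical regime. *)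

theory Defs
  imports "HOL-Probability.Probability"
begin

text \<open>The 2d directions of the d-dimensional ERW, d = CARD('d): the pair (i, b)
  stands for +e_i if b = True and -e_i if b = False.\<close>

definition dirvec :: "'d::finite \<times> bool \<Rightarrow> real ^ 'd" where
  "dirvec u = (\<chi> j. if j = fst u then (if snd u then 1 else -1) else 0)"

text \<open>Conditional probability that step n+1 equals y, given steps x 1, ..., x n.\<close>
definition erw_trans :: "real \<Rightarrow> nat \<Rightarrow> (nat \<Rightarrow> 'd::finite \<times> bool) \<Rightarrow> 'd \<times> bool \<Rightarrow> real" where
  "erw_trans p n x y =
     (1 / real n) * (\<Sum>k\<in>{1..n}. if x k = y then p else (1 - p) / (2 * real CARD('d) - 1))"

text \<open>Probability that the first n steps are x 1, ..., x n (n >= 1).\<close>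
definition erw_prob :: "real \<Rightarrow> nat \<Rightarrow> (nat \<Rightarrow> 'd::finite \<times> bool) \<Rightarrow> real" where
  "erw_prob p n x = (1 / (2 * real CARD('d))) * (\<Prod>m\<in>{1..<n}. erw_trans p m x (x (Suc m)))"

text \<open>X k (k >= 1) are the steps of a d-dimensional elephant random walk with memory
  parameter p on the probability space M (the law is given by its finite-dimensional
  distributions; X 0 is irrelevant).\<close>
definition is_erw :: "'a measure \<Rightarrow> real \<Rightarrow> (nat \<Rightarrow> 'a \<Rightarrow> 'd::finite \<times> bool) \<Rightarrow> bool" where
  "is_erw M p X \<longleftrightarrow> prob_space M \<and> 0 \<le> p \<and> p \<le> 1 \<and>
     (\<forall>k. X k \<in> measurable M (count_space UNIV)) \<and>
     (\<forall>n\<ge>1. \<forall>x. measure M {\<omega>\<in>space M. \<forall>k\<in>{1..n}. X k \<omega> = x k} = erw_prob p n x)"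

definition erw_S :: "(nat \<Rightarrow> 'a \<Rightarrow> 'd::finite \<times> bool) \<Rightarrow> nat \<Rightarrow> 'a \<Rightarrow> real ^ 'd" where
  "erw_S X n \<omega> = (\<Sum>k\<in>{1..n}. dirvec (X k \<omega>))"

definition erw_G :: "(nat \<Rightarrow> 'a \<Rightarrow> 'd::finite \<times> bool) \<Rightarrow> nat \<Rightarrow> 'a \<Rightarrow> real ^ 'd" where
  "erw_G X n \<omega> = (1 / real n) *\<^sub>R (\<Sum>k\<in>{1..n}. erw_S X k \<omega>)"

end

theory Submission
  imports Defs "HOL-Probability.Hoeffding"
begin


definition Paths :: "nat \<Rightarrow> (nat \<Rightarrow> 'd::finite \<times> bool) set" where
  "Paths n = PiE {1..n} (\<lambda>_. UNIV)"

definition sc :: "'d::finite \<Rightarrow> nat \<Rightarrow> (nat \<Rightarrow> 'd \<times> bool) \<Rightarrow> real" where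
  "sc i n x = (\<Sum>k\<in>{1..n}. dirvec (x k) $ i)"

definition gam :: "nat \<Rightarrow> real" where
  "gam n = (\<Prod>k\<in>{1..<n}. (1 + 1 / (2 * real k)))"

definition Mv :: "'d::finite \<Rightarrow> nat \<Rightarrow> (nat \<Rightarrow> 'd \<times> bool) \<Rightarrow> real" where
  "Mv i n x = sc i n x / gam n"

lemma dirvec_nth: "dirvec u $ i = (if i = fst u then (if snd u then 1 else -1) else 0)"
  by (simp add: dirvec_def)

lemma abs_dirvec_le: "\<bar>dirvec u $ i\<bar> \<le> 1"
  by (simp add: dirvec_nth)

lemma sum_dirvec: "(\<Sum>y\<in>UNIV. dirvec y $ (i::'d::finite)) = 0"
proof -
  have "(\<Sum>y\<in>(UNIV::('d \<times> bool) set). dirvec y $ i) = (\<Sum>j\<in>UNIV. \<Sum>b\<in>UNIV. dirvec (j,b) $ i)"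
    by (simp add: UNIV_Times_UNIV[symmetric] sum.cartesian_product del: UNIV_Times_UNIV)
  also have "\<dots> = 0" by (intro sum.neutral) (auto simp: dirvec_nth UNIV_bool)
  finally show ?thesis .
qed

lemma abs_sc_le: "\<bar>sc i n x\<bar> \<le> real n"
proof -
  have "\<bar>sc i n x\<bar> \<le> (\<Sum>k\<in>{1..n}. \<bar>dirvec (x k) $ i\<bar>)" unfolding sc_def by (rule sum_abs)
  also have "\<dots> \<le> (\<Sum>k\<in>{1..n}. 1)" by (intro sum_mono abs_dirvec_le)
  finally show ?thesis by simp
qed

lemma sc_cong: "(\<And>k. k \<in> {1..n} \<Longrightarrow> x k = x' k) \<Longrightarrow> sc i n x = sc i n x'"
  unfolding sc_def by (intro sum.cong) auto

lemma sc_Suc: "sc i (Suc n) x = sc i n x + dirvec (x (Suc n)) $ i"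
  unfolding sc_def by simp

lemma gam_Suc: "n \<ge> 1 \<Longrightarrow> gam (Suc n) = gam n * (1 + 1 / (2 * real n))"
  unfolding gam_def by (simp add: prod.atLeastLessThan_Suc)

lemma gam_pos: "gam n > 0"
  unfolding gam_def by (intro prod_pos) (auto simp: add_pos_nonneg)

lemma gam_1: "gam 1 = 1" by (simp add: gam_def)

lemma gam_l:
  fixes n :: real assumes n: "n \<ge> 1"
  shows "(1 + 1 / (2 * n)) ^ 2 \<ge> (n + 1) / n"
proof -
  have "(1 + 1 / (2 * n)) ^ 2 = 1 + 1/n + 1/(4*n^2)" using n by (simp add: power2_eq_square field_simps)
  moreover have "(n + 1) / n = 1 + 1/n" using n by (simp add: field_simps)
  moreover have "1/(4*n^2) \<ge> 0" by simp
  ultimately show ?thesis by linarith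
qed
lemma gam_u:
  fixes n :: real assumes n: "n \<ge> 1"
  shows "(1 + 1 / (2 * n)) ^ 2 \<le> (2 * n + 1) / (2 * n - 1)"
proof -
  have p: "2 * n - 1 > 0" "n > 0" using n by auto
  have "(1 + 1 / (2 * n)) ^ 2 = (2*n+1)^2 / (4*n^2)" using p by (simp add: power2_eq_square field_simps)
  also have "\<dots> = (2*n+1) * ((2*n+1) / (4*n^2))" by (simp add: power2_eq_square)
  also have "(2*n+1) / (4*n^2) \<le> 1 / (2*n-1)"
    using p by (simp add: divide_simps power2_eq_square) (simp add: algebra_simps)
  then have "(2*n+1) * ((2*n+1) / (4*n^2)) \<le> (2*n+1) * (1 / (2*n-1))"
    using p by (intro mult_left_mono) auto
  finally show ?thesis by simp
qed

lemma gam_sq_bounds: "n \<ge> 1 \<Longrightarrow> real n \<le> gam n ^ 2 \<and> gam n ^ 2 \<le> 2 * real n - 1"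
proof (induction n rule: nat_induct_at_least)
  case base then show ?case by (simp add: gam_def)
next
  case (Suc n)
  have e: "gam (Suc n) ^ 2 = gam n ^ 2 * (1 + 1 / (2 * real n)) ^ 2"
    using gam_Suc[OF Suc.hyps] by (simp add: power_mult_distrib)
  have n: "real n \<ge> 1" using Suc.hyps by simp
  have l: "(1 + 1 / (2 * real n)) ^ 2 \<ge> (real n + 1) / real n"
    using gam_l[OF n] by simp
  have u: "(1 + 1 / (2 * real n)) ^ 2 \<le> (2 * real n + 1) / (2 * real n - 1)"
    using gam_u[OF n] by simp
  have "real (Suc n) = real n * ((real n + 1) / real n)" using n by simp
  also have "\<dots> \<le> gam n ^ 2 * (1 + 1 / (2 * real n)) ^ 2"
    using Suc.IH l n by (intro mult_mono) auto
  finally have 1: "real (Suc n) \<le> gam (Suc n) ^ 2" using e by simp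
  have "gam n ^ 2 * (1 + 1 / (2 * real n)) ^ 2 \<le> (2 * real n - 1) * ((2 * real n + 1) / (2 * real n - 1))"
    using Suc.IH u n by (intro mult_mono) auto
  also have "\<dots> = 2 * real (Suc n) - 1"
  proof -
    have "2 * real n - 1 \<noteq> 0" using n by linarith
    then show ?thesis by simp
  qed
  finally show ?case using 1 e by simp
qed

lemma gam_le: "n \<ge> 1 \<Longrightarrow> gam n \<le> sqrt (2 * real n)"
proof -
  assume "n \<ge> 1"
  then have "gam n ^ 2 \<le> 2 * real n" using gam_sq_bounds[of n] by linarith
  then show ?thesis by (rule real_le_rsqrt)
qed

lemma gam_ge: "n \<ge> 1 \<Longrightarrow> sqrt (real n) \<le> gam n"
proof -
  assume "n \<ge> 1"
  then have "real n \<le> gam n ^ 2" using gam_sq_bounds[of n] by linarith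
  then show ?thesis using gam_pos[of n] by (intro real_le_lsqrt) auto
qed


lemma card_dirs: "card (UNIV :: ('d::finite \<times> bool) set) = 2 * CARD('d)"
  by (simp add: card_UNIV_bool)

lemma card_ge1: "real CARD('d::finite) \<ge> 1" by (simp add: Suc_le_eq)

lemma pq_real:
  fixes c :: real assumes c: "c \<ge> 1"
  shows "(2 * c + 1) / (4 * c) - (1 - (2 * c + 1) / (4 * c)) / (2 * c - 1) = 1/2"
proof -
  have c0: "c > 0" "4 * c \<noteq> 0" "2 * c - 1 \<noteq> 0" using c by auto
  have h1: "1 - (2 * c + 1) / (4 * c) = (2*c-1)/(4*c)" using c0 by (simp add: field_split_simps)
  have h2: "(2*c-1)/(4*c) / (2 * c - 1) = 1/(4*c)" using c0 by (simp add: field_split_simps)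
  have h3: "(2 * c + 1) / (4 * c) - 1/(4*c) = 1/2" using c0 by (simp add: field_split_simps)
  show ?thesis using h1 h2 h3 by simp
qed

lemma pq_lemma: "(2 * real CARD('d::finite) + 1) / (4 * real CARD('d)) - (1 - (2 * real CARD('d) + 1) / (4 * real CARD('d))) / (2 * real CARD('d) - 1) = 1/2"
  by (rule pq_real[OF card_ge1])

lemma q_identity:
  "(1 - p) * (real CARD('d::finite) * 2) / (2 * real CARD('d) - 1) + (p - (1 - p) / (2 * real CARD('d) - 1)) = 1"
proof -
  define c where "c = real CARD('d)"
  have c: "c \<ge> 1" unfolding c_def by (rule card_ge1)
  define q where "q = (1 - p) / (2 * c - 1)"
  have "q * (2 * c) + (p - q) = q * (2 * c - 1) + p"
    by (simp add: algebra_simps)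
  also have "\<dots> = 1" using c unfolding q_def by simp
  finally have e1: "q * (2 * c) + (p - q) = 1" .
  have e2: "q * (2 * c) = (1 - p) * (c * 2) / (2 * c - 1)" unfolding q_def by simp
  from e1 have "(1 - p) * (c * 2) / (2 * c - 1) + (p - q) = 1" by (simp only: e2)
  then show ?thesis by (simp only: q_def c_def)
qed

lemma q_identity': "(1 - p) / (2 * real CARD('d::finite) - 1) * (\<Sum>y\<in>(UNIV::('d \<times> bool) set). 1) + (p - (1 - p) / (2 * real CARD('d) - 1)) * 1 = 1"
proof -
  have "(\<Sum>y\<in>(UNIV::('d \<times> bool) set). (1::real)) = real CARD('d) * 2"
    by (simp only: sum_constant card_dirs)
  then show ?thesis using q_identity[of p, where 'd='d] by (simp only: mult_1_right times_divide_eq_left)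
qed

lemma erw_trans_nonneg:
  assumes "0 \<le> p" "p \<le> 1"
  shows "erw_trans p n (x :: nat \<Rightarrow> 'd::finite \<times> bool) y \<ge> 0"
proof -
  have "2 * real CARD('d) - 1 \<ge> 1" by (simp add: Suc_le_eq)
  then have "2*real CARD('d)-1 > 0" by linarith
  then have "0 \<le> (1-p)/(2*real CARD('d)-1)" using assms by (intro divide_nonneg_pos) auto
  then show ?thesis unfolding erw_trans_def using assms
    by (intro mult_nonneg_nonneg sum_nonneg) auto
qed

lemma sum_if_eq: "(\<Sum>y\<in>UNIV. (if (a::'d::finite \<times> bool) = y then p else q) * (v y::real)) = q * (\<Sum>y\<in>UNIV. v y) + (p - q) * v a"
proof -
  have "(\<Sum>y\<in>UNIV. (if a = y then p else q) * v y) = (\<Sum>y\<in>UNIV. q * v y + (if a = y then (p - q) * v y else 0))"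
    by (intro sum.cong refl) (simp add: ring_distribs)
  also have "\<dots> = q * (\<Sum>y\<in>UNIV. v y) + (p - q) * v a"
    by (simp add: sum.distrib sum_distrib_left)
  finally show ?thesis .
qed

lemma sum_trans:
  assumes "n \<ge> 1"
  shows "(\<Sum>y\<in>UNIV. erw_trans p n (x :: nat \<Rightarrow> 'd::finite \<times> bool) y) = 1"
proof -
  have d: "2 * real CARD('d) - 1 \<ge> 1" by (simp add: Suc_le_eq)
  have d2: "real CARD('d) * 2 - 1 \<noteq> 0" using d by linarith
  have "(\<Sum>y\<in>UNIV. erw_trans p n x y) = (1 / real n) * (\<Sum>k\<in>{1..n}. \<Sum>y\<in>UNIV. (if x k = y then p else (1 - p) / (2 * real CARD('d) - 1)) * 1)"
    unfolding erw_trans_def by (simp add: sum_divide_distrib sum.swap[of _ UNIV])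
  also have "\<dots> = (1 / real n) * (\<Sum>k\<in>{1..n}. 1)"
    unfolding sum_if_eq by (intro arg_cong2[where f="(*)"] sum.cong refl q_identity')
  also have "\<dots> = 1" using assms by simp
  finally show ?thesis .
qed

definition pd :: "'d::finite itself \<Rightarrow> real" where
  "pd _ = (2 * real CARD('d) + 1) / (4 * real CARD('d))"

lemma mean_trans:
  assumes "n \<ge> 1"
  shows "(\<Sum>y\<in>UNIV. erw_trans ((2 * real CARD('d) + 1) / (4 * real CARD('d))) n (x :: nat \<Rightarrow> 'd::finite \<times> bool) y * dirvec y $ i)
     = sc i n x / (2 * real n)"
proof -
  define p where "p = (2 * real CARD('d) + 1) / (4 * real CARD('d))"
  have d: "2 * real CARD('d) - 1 \<ge> 1" by (simp add: Suc_le_eq)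
  have c: "real CARD('d) \<ge> 1" by (simp add: Suc_le_eq)
  have pq: "p - (1 - p) / (2 * real CARD('d) - 1) = 1/2"
    unfolding p_def by (rule pq_lemma)
  have "(\<Sum>y\<in>UNIV. erw_trans p n x y * dirvec y $ i) = (1 / real n) * (\<Sum>k\<in>{1..n}. \<Sum>y\<in>UNIV. (if x k = y then p else (1 - p) / (2 * real CARD('d) - 1)) * dirvec y $ i)"
    unfolding erw_trans_def by (simp add: sum_divide_distrib sum_distrib_right sum.swap[of _ UNIV])
  also have "\<dots> = (1 / real n) * (\<Sum>k\<in>{1..n}. 1/2 * dirvec (x k) $ i)"
    unfolding sum_if_eq sum_dirvec pq by simp
  also have "\<dots> = sc i n x / (2 * real n)"
    unfolding sc_def by (simp add: sum_divide_distrib[symmetric])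
  finally show ?thesis unfolding p_def .
qed

lemma erw_trans_cong:
  "(\<And>k. k \<in> {1..n} \<Longrightarrow> x k = x' k) \<Longrightarrow> erw_trans p n x y = erw_trans p n x' y"
  unfolding erw_trans_def by (intro arg_cong2[where f="(*)"] sum.cong) auto

lemma erw_prob_cong:
  "(\<And>k. k \<in> {1..n} \<Longrightarrow> x k = x' k) \<Longrightarrow> erw_prob p n x = erw_prob p n x'"
  unfolding erw_prob_def
  by (intro arg_cong2[where f="(*)"] prod.cong refl; subst erw_trans_cong[of _ x x']) auto

lemma erw_prob_Suc:
  assumes "n \<ge> 1"
  shows "erw_prob p (Suc n) ((x :: nat \<Rightarrow> 'd::finite \<times> bool)(Suc n := y)) = erw_prob p n x * erw_trans p n x y"
proof -
  have "erw_prob p (Suc n) (x(Suc n := y)) = (1 / (2 * real CARD('d))) *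
     ((\<Prod>m\<in>{1..<n}. erw_trans p m (x(Suc n := y)) ((x(Suc n := y)) (Suc m))) * erw_trans p n (x(Suc n := y)) y)"
    unfolding erw_prob_def using assms by (simp add: prod.atLeastLessThan_Suc)
  also have "(\<Prod>m\<in>{1..<n}. erw_trans p m (x(Suc n := y)) ((x(Suc n := y)) (Suc m))) = (\<Prod>m\<in>{1..<n}. erw_trans p m x (x (Suc m)))"
    by (intro prod.cong refl; subst erw_trans_cong[of _ _ x]) auto
  also have "erw_trans p n (x(Suc n := y)) y = erw_trans p n x y"
    by (rule erw_trans_cong) auto
  finally show ?thesis unfolding erw_prob_def by (simp add: mult_ac)
qed

lemma sum_Paths_Suc:
  "(\<Sum>x'\<in>Paths (Suc n). f x') = (\<Sum>x\<in>Paths n. \<Sum>y\<in>UNIV. f (x(Suc n := y)))"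
proof -
  have e: "{1..Suc n} = insert (Suc n) {1..n}" by auto
  have "(\<Sum>x'\<in>Paths (Suc n). f x') = (\<Sum>x'\<in>(\<lambda>(y, g). g(Suc n := y)) ` (UNIV \<times> Paths n). f x')"
    unfolding Paths_def e PiE_insert_eq by simp
  also have "\<dots> = (\<Sum>(y,g)\<in>UNIV \<times> Paths n. f (g(Suc n := y)))"
    by (subst sum.reindex) (auto simp: Paths_def case_prod_unfold intro!: inj_combinator[of "Suc n" "{1..n}" "\<lambda>_. UNIV", simplified])
  also have "\<dots> = (\<Sum>y\<in>UNIV. \<Sum>g\<in>Paths n. f (g(Suc n := y)))"
    by (subst sum.cartesian_product[symmetric]) simp
  also have "\<dots> = (\<Sum>x\<in>Paths n. \<Sum>y\<in>UNIV. f (x(Suc n := y)))"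
    by (rule sum.swap)
  finally show ?thesis .
qed

lemma finite_Paths: "finite (Paths n)"
  unfolding Paths_def by (intro finite_PiE) auto



lemma cyl_sets:
  assumes E: "is_erw M p X" and n: "n \<ge> 1"
  shows "{\<omega>\<in>space M. \<forall>k\<in>{1..n}. X k \<omega> = x k} \<in> sets M"
proof -
  have m: "X k \<in> measurable M (count_space UNIV)" for k using E unfolding is_erw_def by auto
  have "{\<omega>\<in>space M. X k \<omega> = x k} \<in> sets M" for k
  proof -
    have "X k -` {x k} \<inter> space M \<in> sets M" by (rule measurable_sets[OF m]) auto
    moreover have "{\<omega>\<in>space M. X k \<omega> = x k} = X k -` {x k} \<inter> space M" by auto
    ultimately show ?thesis by simp
  qed
  then show ?thesis using n by (intro sets.sets_Collect_finite_All') auto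
qed

lemma erw_event:
  assumes E: "is_erw M p X" and n: "n \<ge> 1"
    and Qc: "\<And>x x'. (\<And>k. k \<in> {1..n} \<Longrightarrow> x k = x' k) \<Longrightarrow> Q x = Q x'"
  shows "{\<omega>\<in>space M. Q (\<lambda>k. X k \<omega>)} \<in> sets M"
    and "measure M {\<omega>\<in>space M. Q (\<lambda>k. X k \<omega>)} = (\<Sum>x\<in>{x\<in>Paths n. Q x}. erw_prob p n x)"
proof -
  interpret prob_space M using E unfolding is_erw_def by auto
  define C where "C x = {\<omega>\<in>space M. \<forall>k\<in>{1..n}. X k \<omega> = x k}" for x
  have Cs: "C x \<in> sets M" for x unfolding C_def by (rule cyl_sets[OF E n])
  have eq: "{\<omega>\<in>space M. Q (\<lambda>k. X k \<omega>)} = (\<Union>x\<in>{x\<in>Paths n. Q x}. C x)"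
  proof (intro equalityI subsetI)
    fix \<omega> assume \<omega>: "\<omega> \<in> {\<omega>\<in>space M. Q (\<lambda>k. X k \<omega>)}"
    define x where "x = restrict (\<lambda>k. X k \<omega>) {1..n}"
    have "x \<in> Paths n" unfolding x_def Paths_def by auto
    moreover have "Q x = Q (\<lambda>k. X k \<omega>)" by (rule Qc) (simp add: x_def)
    moreover have "\<omega> \<in> C x" using \<omega> unfolding C_def x_def by auto
    ultimately show "\<omega> \<in> (\<Union>x\<in>{x\<in>Paths n. Q x}. C x)" using \<omega> by auto
  next
    fix \<omega> assume "\<omega> \<in> (\<Union>x\<in>{x\<in>Paths n. Q x}. C x)"
    then obtain x where x: "Q x" "\<omega> \<in> C x" by auto
    have "Q x = Q (\<lambda>k. X k \<omega>)" by (rule Qc) (use x(2) in \<open>auto simp: C_def\<close>)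
    then show "\<omega> \<in> {\<omega>\<in>space M. Q (\<lambda>k. X k \<omega>)}" using x unfolding C_def by auto
  qed
  have fin: "finite {x\<in>Paths n. Q x}" by (rule finite_subset[OF _ finite_Paths]) auto
  show "{\<omega>\<in>space M. Q (\<lambda>k. X k \<omega>)} \<in> sets M"
    unfolding eq using fin Cs by auto
  have disj: "disjoint_family_on C {x\<in>Paths n. Q x}"
    unfolding disjoint_family_on_def
  proof (intro ballI impI)
    fix x x' assume xx: "x \<in> {x\<in>Paths n. Q x}" "x' \<in> {x\<in>Paths n. Q x}" "x \<noteq> x'"
    have "\<exists>k\<in>{1..n}. x k \<noteq> x' k"
    proof (rule ccontr)
      assume "\<not> ?thesis"
      then have "x = x'" using xx(1,2) unfolding Paths_def by (intro PiE_ext[of x "{1..n}" _ x']) auto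
      then show False using xx(3) by simp
    qed
    then obtain k where k: "k \<in> {1..n}" "x k \<noteq> x' k" by blast
    then show "C x \<inter> C x' = {}" unfolding C_def by auto
  qed
  have "measure M {\<omega>\<in>space M. Q (\<lambda>k. X k \<omega>)} = (\<Sum>x\<in>{x\<in>Paths n. Q x}. measure M (C x))"
    unfolding eq by (rule measure_finite_Union[OF fin _ disj]) (use Cs in auto)
  also have "\<dots> = (\<Sum>x\<in>{x\<in>Paths n. Q x}. erw_prob p n x)"
  proof (intro sum.cong refl)
    fix x assume "x \<in> {x\<in>Paths n. Q x}"
    show "measure M (C x) = erw_prob p n x" using E n unfolding is_erw_def C_def by blast
  qed
  finally show "measure M {\<omega>\<in>space M. Q (\<lambda>k. X k \<omega>)} = (\<Sum>x\<in>{x\<in>Paths n. Q x}. erw_prob p n x)" .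
qed

lemma erw_prob_nonneg:
  fixes X :: "nat \<Rightarrow> 'a \<Rightarrow> 'd::finite \<times> bool" and x :: "nat \<Rightarrow> 'd \<times> bool"
  assumes E: "is_erw M p X" and n: "n \<ge> 1"
  shows "erw_prob p n x \<ge> 0"
proof -
  have "measure M {\<omega>\<in>space M. \<forall>k\<in>{1..n}. X k \<omega> = x k} = erw_prob p n x"
    using E n unfolding is_erw_def by blast
  then show ?thesis using measure_nonneg[of M "{\<omega>\<in>space M. \<forall>k\<in>{1..n}. X k \<omega> = x k}"] by simp
qed

lemma sum_Paths_one:
  fixes X :: "nat \<Rightarrow> 'a \<Rightarrow> 'd::finite \<times> bool"
  assumes E: "is_erw M p X" and n: "n \<ge> 1"
  shows "(\<Sum>x\<in>(Paths n :: (nat \<Rightarrow> 'd \<times> bool) set). erw_prob p n x) = 1"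
proof -
  interpret prob_space M using E unfolding is_erw_def by auto
  have "measure M {\<omega>\<in>space M. (\<lambda>_::nat \<Rightarrow> 'd \<times> bool. True) (\<lambda>k. X k \<omega>)} = (\<Sum>x\<in>{x\<in>(Paths n :: (nat \<Rightarrow> 'd \<times> bool) set). True}. erw_prob p n x)"
    by (rule erw_event(2)[OF E n]) simp
  then have "measure M (space M) = (\<Sum>x\<in>(Paths n :: (nat \<Rightarrow> 'd \<times> bool) set). erw_prob p n x)" by simp
  moreover have "measure M (space M) = 1" by (rule prob_space)
  ultimately show ?thesis by simp
qed



lemma cosh_le:
  fixes a :: real
  shows "(exp (-a) + exp a) / 2 \<le> exp (a^2 / 2)"
proof -
  define b where "b = \<bar>a\<bar>"
  have b: "b \<ge> 0" unfolding b_def by simp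
  have sym: "(exp (-a) + exp a) / 2 = (exp (-b) + exp b) / 2"
    unfolding b_def by (cases "a \<ge> 0") auto
  have a2: "a^2 = b^2" unfolding b_def by simp
  have H: "-(2*b) * (1/2) + ln (1 + (1/2) * (exp (2*b) - 1)) \<le> (2*b)^2 / 8"
    using Hoeffdings_lemma_aux[of "2*b" "1/2"] b by simp
  have e1: "-(2*b) * (1/2) = -b" by simp
  have e2: "1 + (1/2) * (exp (2*b) - 1) = (1 + exp (2*b)) / 2" by (simp add: field_simps)
  have e3: "(2*b)^2 / 8 = b^2/2" by (simp add: power2_eq_square)
  have "ln ((1 + exp (2*b)) / 2) \<le> b + b^2/2"
    using H unfolding e1 e2 e3 by linarith
  then have "exp (ln ((1 + exp (2*b)) / 2)) \<le> exp (b + b^2/2)" by simp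
  moreover have "exp (ln ((1 + exp (2*b)) / 2)) = (1 + exp (2*b)) / 2"
    by (intro exp_ln) (simp add: add_pos_pos)
  ultimately have "(1 + exp (2*b)) / 2 \<le> exp (b + b^2/2)" by simp
  also have "\<dots> = exp b * exp (b^2/2)" by (simp add: exp_add)
  finally have 1: "(1 + exp (2*b)) / 2 \<le> exp b * exp (b^2/2)" .
  have eb: "exp (2*b) = exp b * exp b" by (metis mult_2 exp_add)
  have "(exp (-b) + exp b) / 2 = ((1 + exp (2*b)) / 2) / exp b"
    unfolding eb by (simp add: exp_minus field_simps)
  also have "\<dots> \<le> (exp b * exp (b^2/2)) / exp b"
    using 1 by (intro divide_right_mono) auto
  also have "\<dots> = exp (b^2/2)" by simp
  finally show ?thesis using sym a2 by simp
qed

lemma hoeff_fin: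
  fixes T D :: "'b \<Rightarrow> real" and c l :: real
  assumes fin: "finite Y" and T0: "\<And>y. y\<in>Y \<Longrightarrow> T y \<ge> 0" and T1: "(\<Sum>y\<in>Y. T y) = 1"
    and TD: "(\<Sum>y\<in>Y. T y * D y) = 0" and Dc: "\<And>y. y\<in>Y \<Longrightarrow> \<bar>D y\<bar> \<le> c" and c: "c > 0"
  shows "(\<Sum>y\<in>Y. T y * exp (l * D y)) \<le> exp (l^2 * c^2 / 2)"
proof -
  have pt: "exp (l * D y) \<le> (c - D y) / (2*c) * exp (-(l*c)) + (c + D y) / (2*c) * exp (l*c)" if y: "y \<in> Y" for y
  proof -
    define t where "t = (c + D y) / (2*c)"
    have t0: "0 \<le> t" "t \<le> 1" using Dc[OF y] c unfolding t_def by (auto simp: abs_le_iff field_simps)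
    have 1: "1 - t = (c - D y) / (2*c)" unfolding t_def using c by (simp add: field_simps)
    have 2: "(1 - t) * (-(l*c)) + t * (l*c) = l * D y" unfolding t_def using c by (simp add: field_simps)
    have "exp ((1 - t) * (-(l*c)) + t * (l*c)) \<le> (1 - t) * exp (-(l*c)) + t * exp (l*c)"
      using convex_onD[OF exp_convex, of t "-(l*c)" "l*c"] t0 by simp
    then have "exp (l * D y) \<le> (1 - t) * exp (-(l*c)) + t * exp (l*c)" by (simp only: 2)
    then show ?thesis unfolding 1 unfolding t_def .
  qed
  have "(\<Sum>y\<in>Y. T y * exp (l * D y)) \<le> (\<Sum>y\<in>Y. T y * ((c - D y) / (2*c) * exp (-(l*c)) + (c + D y) / (2*c) * exp (l*c)))"
    by (intro sum_mono mult_left_mono pt T0)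
  also have "\<dots> = (\<Sum>y\<in>Y. (exp (-(l*c)) / (2*c)) * (c * T y - T y * D y) + (exp (l*c) / (2*c)) * (c * T y + T y * D y))"
    using c by (intro sum.cong refl) (simp add: field_simps)
  also have "\<dots> = (exp (-(l*c)) / (2*c)) * (c * (\<Sum>y\<in>Y. T y) - (\<Sum>y\<in>Y. T y * D y))
                 + (exp (l*c) / (2*c)) * (c * (\<Sum>y\<in>Y. T y) + (\<Sum>y\<in>Y. T y * D y))"
  proof -
    define A where "A = exp (-(l*c)) / (2*c)"
    define B where "B = exp (l*c) / (2*c)"
    show ?thesis unfolding A_def[symmetric] B_def[symmetric]
      by (simp add: sum.distrib sum_subtractf sum_distrib_left right_diff_distrib distrib_left)
  qed
  also have "\<dots> = (exp (-(l*c)) + exp (l*c)) / 2"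
    unfolding T1 TD using c by (simp add: field_simps)
  also have "\<dots> \<le> exp ((l*c)^2 / 2)" by (rule cosh_le)
  finally show ?thesis by (simp add: power_mult_distrib)
qed



lemma Mv_Suc:
  assumes k: "k \<ge> 1"
  shows "Mv i (Suc k) (x(Suc k := y)) = Mv i k x + (dirvec y $ i - sc i k x / (2 * real k)) / gam (Suc k)"
proof -
  have s: "sc i (Suc k) (x(Suc k := y)) = sc i k x + dirvec y $ i"
  proof -
    have "sc i k (x(Suc k := y)) = sc i k x" by (rule sc_cong) auto
    then show ?thesis unfolding sc_Suc by simp
  qed
  have g: "gam (Suc k) = gam k * (1 + 1 / (2 * real k))" by (rule gam_Suc[OF k])
  have gp: "gam k > 0" by (rule gam_pos)
  have kp: "real k > 0" using k by simp
  define r where "r = 1 + 1 / (2 * real k)"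
  have rp: "r > 0" unfolding r_def using kp by (simp add: add_pos_pos)
  have e1: "sc i k x * r - sc i k x / (2 * real k) = sc i k x" unfolding r_def by (simp add: algebra_simps)
  have e2: "sc i k x / gam k = sc i k x * r / (gam k * r)" using rp by simp
  have "sc i k x / gam k + (dirvec y $ i - sc i k x / (2 * real k)) / (gam k * r)
      = (sc i k x * r + (dirvec y $ i - sc i k x / (2 * real k))) / (gam k * r)"
    unfolding e2 by (simp add: add_divide_distrib)
  also have "\<dots> = (sc i k x + dirvec y $ i) / (gam k * r)" using e1 by (simp add: algebra_simps)
  finally show ?thesis unfolding Mv_def s g r_def[symmetric] by simp
qed

lemma Mv_upd:
  assumes "m \<le> k"
  shows "Mv i m (x(Suc k := y)) = Mv i m x"
  unfolding Mv_def using assms by (subst sc_cong[of m _ x]) auto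

lemma sum_lin:
  fixes T v :: "'b \<Rightarrow> real"
  shows "(\<Sum>y\<in>Y. T y * ((v y - a) / g)) = ((\<Sum>y\<in>Y. T y * v y) - a * (\<Sum>y\<in>Y. T y)) / g"
proof -
  have "(\<Sum>y\<in>Y. T y * ((v y - a) / g)) = (\<Sum>y\<in>Y. (T y * v y) / g - (a * T y) / g)"
    by (intro sum.cong refl) (simp add: right_diff_distrib diff_divide_distrib mult.commute)
  also have "\<dots> = ((\<Sum>y\<in>Y. T y * v y) - a * (\<Sum>y\<in>Y. T y)) / g"
    by (simp add: sum_subtractf sum_divide_distrib[symmetric] sum_distrib_left diff_divide_distrib)
  finally show ?thesis .
qed

lemma azuma:
  fixes X :: "nat \<Rightarrow> 'a \<Rightarrow> 'd::finite \<times> bool" and i :: 'd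
  assumes E: "is_erw M ((2 * real CARD('d) + 1) / (4 * real CARD('d))) X" and m: "1 \<le> m" "m \<le> n"
  shows "(\<Sum>x\<in>(Paths n :: (nat \<Rightarrow> 'd \<times> bool) set). erw_prob ((2 * real CARD('d) + 1) / (4 * real CARD('d))) n x * exp (l * (Mv i n x - Mv i m x)))
         \<le> exp (l^2 / 2 * (\<Sum>k\<in>{m..<n}. (3 / (2 * gam (Suc k)))^2))"
  using m(2)
proof (induction n rule: dec_induct)
  case base
  show ?case using sum_Paths_one[OF E m(1)] by simp
next
  case (step k)
  define P0 where "P0 = (2 * real CARD('d) + 1) / (4 * real CARD('d))"
  have E': "is_erw M P0 X" using E unfolding P0_def .
  have P01: "0 \<le> P0" "P0 \<le> 1" using E' unfolding is_erw_def by auto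
  have k: "k \<ge> 1" using step m by simp
  define c where "c = 3 / (2 * gam (Suc k))"
  have c: "c > 0" unfolding c_def using gam_pos[of "Suc k"] by simp
  define D where "D x y = (dirvec y $ i - sc i k x / (2 * real k)) / gam (Suc k)" for x :: "nat \<Rightarrow> 'd \<times> bool" and y
  define Z where "Z x = Mv i k x - Mv i m x" for x :: "nat \<Rightarrow> 'd \<times> bool"
  define V where "V = (\<Sum>k\<in>{m..<k}. (3 / (2 * gam (Suc k)))^2)"
  have IH: "(\<Sum>x\<in>(Paths k :: (nat \<Rightarrow> 'd \<times> bool) set). erw_prob P0 k x * exp (l * Z x)) \<le> exp (l^2 / 2 * V)"
    using step.IH unfolding P0_def Z_def V_def .
  have hoeff: "(\<Sum>y\<in>UNIV. erw_trans P0 k x y * exp (l * D x y)) \<le> exp (l^2 * c^2 / 2)" for x :: "nat \<Rightarrow> 'd \<times> bool"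
  proof (rule hoeff_fin)
    show "finite (UNIV :: ('d \<times> bool) set)" by simp
    show "erw_trans P0 k x y \<ge> 0" for y by (rule erw_trans_nonneg[OF P01])
    show "(\<Sum>y\<in>UNIV. erw_trans P0 k x y) = 1" by (rule sum_trans[OF k])
    show "(\<Sum>y\<in>UNIV. erw_trans P0 k x y * D x y) = 0"
      unfolding D_def sum_lin using mean_trans[OF k, of x i] sum_trans[OF k, of P0 x] unfolding P0_def by simp
    show "\<bar>D x y\<bar> \<le> c" for y
    proof -
      have g: "gam (Suc k) > 0" by (rule gam_pos)
      have kp: "2 * real k > 0" using k by simp
      have a: "\<bar>sc i k x\<bar> \<le> real k" by (rule abs_sc_le)
      have b1: "sc i k x / (2 * real k) \<le> 1/2"
        using kp a by (simp add: pos_divide_le_eq abs_le_iff)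
      have b2: "-(1/2) \<le> sc i k x / (2 * real k)"
        using kp a by (simp add: pos_le_divide_eq abs_le_iff)
      have v: "\<bar>dirvec y $ i\<bar> \<le> 1" by (rule abs_dirvec_le)
      have h: "\<bar>dirvec y $ i - sc i k x / (2 * real k)\<bar> \<le> 3/2"
        using b1 b2 v unfolding abs_le_iff by linarith
      have "\<bar>D x y\<bar> = \<bar>dirvec y $ i - sc i k x / (2 * real k)\<bar> / gam (Suc k)"
        unfolding D_def abs_divide using g by simp
      also have "\<dots> \<le> (3/2) / gam (Suc k)"
        using h g by (intro divide_right_mono) auto
      also have "\<dots> = c" unfolding c_def by simp
      finally show ?thesis .
    qed
    show "c > 0" by (rule c)
  qed
  have "(\<Sum>x\<in>(Paths (Suc k) :: (nat \<Rightarrow> 'd \<times> bool) set). erw_prob P0 (Suc k) x * exp (l * (Mv i (Suc k) x - Mv i m x)))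
      = (\<Sum>x\<in>(Paths k :: (nat \<Rightarrow> 'd \<times> bool) set). \<Sum>y\<in>UNIV. erw_prob P0 (Suc k) (x(Suc k := y)) * exp (l * (Mv i (Suc k) (x(Suc k := y)) - Mv i m (x(Suc k := y)))))"
    by (rule sum_Paths_Suc)
  also have "\<dots> = (\<Sum>x\<in>(Paths k :: (nat \<Rightarrow> 'd \<times> bool) set). \<Sum>y\<in>UNIV. (erw_prob P0 k x * exp (l * Z x)) * (erw_trans P0 k x y * exp (l * D x y)))"
  proof (intro sum.cong refl)
    fix x :: "nat \<Rightarrow> 'd \<times> bool" and y
    have "Mv i (Suc k) (x(Suc k := y)) - Mv i m (x(Suc k := y)) = Z x + D x y"
      unfolding Mv_Suc[OF k] Mv_upd[OF step.hyps(1)] Z_def D_def by simp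
    then show "erw_prob P0 (Suc k) (x(Suc k := y)) * exp (l * (Mv i (Suc k) (x(Suc k := y)) - Mv i m (x(Suc k := y))))
        = (erw_prob P0 k x * exp (l * Z x)) * (erw_trans P0 k x y * exp (l * D x y))"
    proof -
      have "exp (l * (Z x + D x y)) = exp (l * Z x) * exp (l * D x y)" by (simp add: distrib_left exp_add)
      then show ?thesis unfolding erw_prob_Suc[OF k] \<open>Mv i (Suc k) (x(Suc k := y)) - Mv i m (x(Suc k := y)) = Z x + D x y\<close>
        by (simp only: mult_ac)
    qed
  qed
  also have "\<dots> = (\<Sum>x\<in>(Paths k :: (nat \<Rightarrow> 'd \<times> bool) set). (erw_prob P0 k x * exp (l * Z x)) * (\<Sum>y\<in>UNIV. erw_trans P0 k x y * exp (l * D x y)))"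
    by (simp add: sum_distrib_left)
  also have "\<dots> \<le> (\<Sum>x\<in>(Paths k :: (nat \<Rightarrow> 'd \<times> bool) set). (erw_prob P0 k x * exp (l * Z x)) * exp (l^2 * c^2 / 2))"
    by (intro sum_mono mult_left_mono hoeff mult_nonneg_nonneg erw_prob_nonneg[OF E' k]) auto
  also have "\<dots> = (\<Sum>x\<in>(Paths k :: (nat \<Rightarrow> 'd \<times> bool) set). erw_prob P0 k x * exp (l * Z x)) * exp (l^2 * c^2 / 2)"
    by (simp add: sum_distrib_right)
  also have "\<dots> \<le> exp (l^2 / 2 * V) * exp (l^2 * c^2 / 2)"
    by (intro mult_right_mono IH) auto
  also have "\<dots> = exp (l^2 / 2 * (\<Sum>k\<in>{m..<Suc k}. (3 / (2 * gam (Suc k)))^2))"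
  proof -
    have s: "(\<Sum>k\<in>{m..<Suc k}. (3 / (2 * gam (Suc k)))^2) = V + c^2"
      unfolding V_def c_def using step.hyps(1) by (simp add: sum.atLeastLessThan_Suc)
    have "l^2 / 2 * (V + c^2) = l^2 / 2 * V + l^2 * c^2 / 2" by (simp add: algebra_simps)
    then show ?thesis unfolding s by (simp add: exp_add[symmetric])
  qed
  finally show ?case unfolding P0_def .
qed



lemma Mv_cong:
  "(\<And>k. k \<in> {1..n} \<Longrightarrow> x k = x' k) \<Longrightarrow> Mv i n x = Mv i n x'"
  unfolding Mv_def by (subst sc_cong[of n x x']) auto

lemma one_le_exps:
  fixes l t z :: real
  assumes l: "l \<ge> 0" and z: "\<bar>z\<bar> \<ge> t"
  shows "1 \<le> exp (l * z - l * t) + exp (- (l * z) - l * t)"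
proof (cases "z \<ge> t")
  case True
  then have "l * (z - t) \<ge> 0" using l by simp
  then have "l * z - l * t \<ge> 0" by (simp add: algebra_simps)
  then have "1 \<le> exp (l * z - l * t)" by simp
  moreover have "0 \<le> exp (- (l * z) - l * t)" by simp
  ultimately show ?thesis by linarith
next
  case False
  then have "-z \<ge> t" using z by (auto simp: abs_if split: if_splits)
  then have "l * (-z - t) \<ge> 0" using l by simp
  then have "- (l * z) - l * t \<ge> 0" by (simp add: algebra_simps)
  then have "1 \<le> exp (- (l * z) - l * t)" by simp
  moreover have "0 \<le> exp (l * z - l * t)" by simp
  ultimately show ?thesis by linarith
qed

lemma tail:
  fixes X :: "nat \<Rightarrow> 'a \<Rightarrow> 'd::finite \<times> bool" and i :: 'd
  assumes E: "is_erw M ((2 * real CARD('d) + 1) / (4 * real CARD('d))) X" and m: "1 \<le> m" "m \<le> n"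
    and V: "V > 0" "(\<Sum>k\<in>{m..<n}. (3 / (2 * gam (Suc k)))^2) \<le> V" and t: "t \<ge> 0"
  shows "{\<omega>\<in>space M. \<bar>Mv i n (\<lambda>k. X k \<omega>) - Mv i m (\<lambda>k. X k \<omega>)\<bar> \<ge> t} \<in> sets M"
    and "measure M {\<omega>\<in>space M. \<bar>Mv i n (\<lambda>k. X k \<omega>) - Mv i m (\<lambda>k. X k \<omega>)\<bar> \<ge> t} \<le> 2 * exp (- (t^2) / (2 * V))"
proof -
  define P0 where "P0 = (2 * real CARD('d) + 1) / (4 * real CARD('d))"
  have E': "is_erw M P0 X" using E unfolding P0_def .
  have n: "n \<ge> 1" using m by simp
  define Q where "Q x = (\<bar>Mv i n x - Mv i m x\<bar> \<ge> t)" for x :: "nat \<Rightarrow> 'd \<times> bool"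
  have Qc: "Q x = Q x'" if "\<And>k. k \<in> {1..n} \<Longrightarrow> x k = x' k" for x x'
  proof -
    have "Mv i n x = Mv i n x'" by (rule Mv_cong) (use that in auto)
    moreover have "Mv i m x = Mv i m x'" by (rule Mv_cong) (use that m in auto)
    ultimately show ?thesis unfolding Q_def by simp
  qed
  show "{\<omega>\<in>space M. \<bar>Mv i n (\<lambda>k. X k \<omega>) - Mv i m (\<lambda>k. X k \<omega>)\<bar> \<ge> t} \<in> sets M"
    using erw_event(1)[OF E' n, of Q] Qc unfolding Q_def by blast
  have meq: "measure M {\<omega>\<in>space M. \<bar>Mv i n (\<lambda>k. X k \<omega>) - Mv i m (\<lambda>k. X k \<omega>)\<bar> \<ge> t}
      = (\<Sum>x\<in>{x\<in>Paths n. Q x}. erw_prob P0 n x)"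
    using erw_event(2)[OF E' n, of Q] Qc unfolding Q_def by blast
  define l where "l = t / V"
  have l0: "l \<ge> 0" unfolding l_def using t V by simp
  define Z where "Z x = Mv i n x - Mv i m x" for x :: "nat \<Rightarrow> 'd \<times> bool"
  define F where "F x = exp (l * Z x - l * t) + exp (- (l * Z x) - l * t)" for x
  have w0: "erw_prob P0 n x \<ge> 0" for x :: "nat \<Rightarrow> 'd \<times> bool" by (rule erw_prob_nonneg[OF E' n])
  have A: "(\<Sum>x\<in>(Paths n :: (nat \<Rightarrow> 'd \<times> bool) set). erw_prob P0 n x * exp (l' * Z x)) \<le> exp (l^2 / 2 * V)"
    if "l'^2 = l^2" for l'
  proof -
    have "(\<Sum>x\<in>(Paths n :: (nat \<Rightarrow> 'd \<times> bool) set). erw_prob P0 n x * exp (l' * Z x))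
        \<le> exp (l'^2 / 2 * (\<Sum>k\<in>{m..<n}. (3 / (2 * gam (Suc k)))^2))"
      using azuma[OF E m, where i=i and l=l'] unfolding Z_def P0_def .
    also have "\<dots> \<le> exp (l^2 / 2 * V)" unfolding that using V(2)
      by (intro iffD2[OF exp_le_cancel_iff] mult_left_mono) auto
    finally show ?thesis .
  qed
  have "(\<Sum>x\<in>{x\<in>Paths n. Q x}. erw_prob P0 n x) \<le> (\<Sum>x\<in>{x\<in>Paths n. Q x}. erw_prob P0 n x * F x)"
  proof (intro sum_mono)
    fix x :: "nat \<Rightarrow> 'd \<times> bool" assume "x \<in> {x\<in>Paths n. Q x}"
    then have "1 \<le> F x" unfolding F_def Q_def Z_def using one_le_exps[OF l0] by auto
    then show "erw_prob P0 n x \<le> erw_prob P0 n x * F x" using w0[of x] by (simp add: mult_le_cancel_left1)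
  qed
  also have "\<dots> \<le> (\<Sum>x\<in>(Paths n :: (nat \<Rightarrow> 'd \<times> bool) set). erw_prob P0 n x * F x)"
    by (intro sum_mono2 finite_Paths mult_nonneg_nonneg w0) (auto simp: F_def)
  also have "\<dots> = exp (- (l * t)) * ((\<Sum>x\<in>(Paths n :: (nat \<Rightarrow> 'd \<times> bool) set). erw_prob P0 n x * exp (l * Z x))
                  + (\<Sum>x\<in>(Paths n :: (nat \<Rightarrow> 'd \<times> bool) set). erw_prob P0 n x * exp ((-l) * Z x)))"
  proof -
    have "erw_prob P0 n x * F x = exp (- (l * t)) * (erw_prob P0 n x * exp (l * Z x) + erw_prob P0 n x * exp ((-l) * Z x))" for x
    proof -
      have "exp (l * Z x - l * t) = exp (- (l * t)) * exp (l * Z x)" by (simp add: exp_add[symmetric])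
      moreover have "exp (- (l * Z x) - l * t) = exp (- (l * t)) * exp ((-l) * Z x)" by (simp add: exp_add[symmetric])
      ultimately show ?thesis unfolding F_def by (simp add: algebra_simps)
    qed
    then show ?thesis by (simp add: sum_distrib_left[symmetric] sum.distrib)
  qed
  also have "\<dots> \<le> exp (- (l * t)) * (exp (l^2 / 2 * V) + exp (l^2 / 2 * V))"
    by (intro mult_left_mono add_mono A) auto
  also have "\<dots> = 2 * exp (- (t^2) / (2 * V))"
  proof -
    have "- (l * t) + l^2 / 2 * V = - (t^2) / (2 * V)"
      unfolding l_def using V(1) by (simp add: field_simps power2_eq_square)
    then have "exp (- (l * t)) * exp (l^2 / 2 * V) = exp (- (t^2) / (2 * V))"
      by (simp add: exp_add[symmetric])
    then show ?thesis by simp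
  qed
  finally show "measure M {\<omega>\<in>space M. \<bar>Mv i n (\<lambda>k. X k \<omega>) - Mv i m (\<lambda>k. X k \<omega>)\<bar> \<ge> t} \<le> 2 * exp (- (t^2) / (2 * V))"
    unfolding meq .
qed



lemma term_bound: "(3 / (2 * gam (Suc k)))^2 \<le> 9/4 * (1 / (real k + 1))"
proof -
  have g: "gam (Suc k) ^ 2 \<ge> real k + 1" using gam_sq_bounds[of "Suc k"] by simp
  have "(3 / (2 * gam (Suc k)))^2 = 9/4 * (1 / gam (Suc k) ^ 2)" by (simp add: power_divide power_mult_distrib)
  also have "\<dots> \<le> 9/4 * (1 / (real k + 1))"
    using g gam_pos[of "Suc k"] by (intro mult_left_mono divide_left_mono) auto
  finally show ?thesis .
qed

lemma block_sum: "(\<Sum>k\<in>{(2::nat)^j..<2^(j+1)}. 1 / (real k + 1)) \<le> 1"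
proof -
  have "(\<Sum>k\<in>{(2::nat)^j..<2^(j+1)}. 1 / (real k + 1)) \<le> (\<Sum>k\<in>{(2::nat)^j..<2^(j+1)}. 1 / 2^j)"
  proof (intro sum_mono)
    fix k assume "k \<in> {(2::nat)^j..<2^(j+1)}"
    then have "(2::nat)^j \<le> k" by simp
    then have "(2::real)^j \<le> real k" by (metis of_nat_le_iff of_nat_numeral of_nat_power)
    then have "(2::real)^j \<le> real k + 1" by linarith
    then show "1 / (real k + 1) \<le> 1 / 2^j" by (intro divide_left_mono) auto
  qed
  also have "\<dots> = 1" by simp
  finally show ?thesis .
qed

lemma V_block:
  assumes "n \<le> 2^(j+1)"
  shows "(\<Sum>k\<in>{(2::nat)^j..<n}. (3 / (2 * gam (Suc k)))^2) \<le> 9/4"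
proof -
  have "(\<Sum>k\<in>{(2::nat)^j..<n}. (3 / (2 * gam (Suc k)))^2) \<le> (\<Sum>k\<in>{(2::nat)^j..<2^(j+1)}. (3 / (2 * gam (Suc k)))^2)"
    using assms by (intro sum_mono2) auto
  also have "\<dots> \<le> (\<Sum>k\<in>{(2::nat)^j..<2^(j+1)}. 9/4 * (1 / (real k + 1)))"
    by (intro sum_mono term_bound)
  also have "\<dots> = 9/4 * (\<Sum>k\<in>{(2::nat)^j..<2^(j+1)}. 1 / (real k + 1))"
    by (simp add: sum_distrib_left)
  also have "\<dots> \<le> 9/4" using block_sum[of j] by simp
  finally show ?thesis .
qed

lemma V_init: "(\<Sum>k\<in>{1..<(2::nat)^j}. (3 / (2 * gam (Suc k)))^2) \<le> 9/4 * real j"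
proof (induction j)
  case 0 then show ?case by simp
next
  case (Suc j)
  have le: "(1::nat) \<le> 2^j" "(2::nat)^j \<le> 2^(Suc j)" by simp_all
  have "(\<Sum>k\<in>{1..<(2::nat)^Suc j}. (3 / (2 * gam (Suc k)))^2)
      = (\<Sum>k\<in>{1..<(2::nat)^j}. (3 / (2 * gam (Suc k)))^2) + (\<Sum>k\<in>{(2::nat)^j..<2^(j+1)}. (3 / (2 * gam (Suc k)))^2)"
    using sum.atLeastLessThan_concat[OF le, of "\<lambda>k. (3 / (2 * gam (Suc k)))^2"] by simp
  also have "\<dots> \<le> 9/4 * real j + 9/4"
    using Suc.IH V_block[of "2^(j+1)" j] by (intro add_mono) auto
  finally show ?case by (simp add: algebra_simps)
qed

lemma summable_bound:
  fixes a C :: real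
  assumes a: "a > 0" and C: "C \<ge> 0"
  shows "summable (\<lambda>j::nat. C * (2 * exp (- (a * real j^2 / (real j + 1)))) + C * 2^(j+1) * (2 * exp (- (a * real j^2))))"
proof (rule summable_comparison_test')
  show "summable (\<lambda>j::nat. 2 * C * exp a * exp (-a) ^ j + 4 * C * exp (-1) ^ j)"
    using a by (intro summable_add summable_mult summable_geometric) auto
  define N where "N = nat \<lceil>(ln 2 + 1) / a\<rceil>"
  fix j :: nat assume j: "j \<ge> N"
  have t1: "exp (- (a * real j^2 / (real j + 1))) \<le> exp a * exp (-a) ^ j"
  proof -
    have "real j^2 / (real j + 1) \<ge> real j - 1"
      by (simp add: field_simps power2_eq_square)
    then have "a * real j^2 / (real j + 1) \<ge> a * (real j - 1)"
      using a by (metis mult_left_mono less_imp_le times_divide_eq_right)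
    then have "- (a * real j^2 / (real j + 1)) \<le> a + real j * (-a)" by (simp add: algebra_simps)
    then have "exp (- (a * real j^2 / (real j + 1))) \<le> exp (a + real j * (-a))" by simp
    also have "\<dots> = exp a * exp (-a) ^ j" by (simp only: exp_add exp_of_nat_mult)
    finally show ?thesis .
  qed
  have t2: "2^(j+1) * exp (- (a * real j^2)) \<le> 2 * exp (-1) ^ j"
  proof -
    have "real j \<ge> (ln 2 + 1) / a" using j unfolding N_def by linarith
    then have "a * real j \<ge> ln 2 + 1" using a by (simp add: field_simps)
    then have "a * real j * real j \<ge> (ln 2 + 1) * real j" by (intro mult_right_mono) auto
    then have "real j * ln 2 - a * real j^2 \<le> real j * (-1)" by (simp add: algebra_simps power2_eq_square)
    then have "exp (real j * ln 2 - a * real j^2) \<le> exp (real j * (-1))" by simp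
    moreover have "exp (real j * ln 2 - a * real j^2) = 2^j * exp (- (a * real j^2))"
    proof -
      have "exp (real j * ln 2) = 2^j" by (simp add: exp_of_nat_mult)
      moreover have "exp (real j * ln 2 - a * real j^2) = exp (real j * ln 2) * exp (- (a * real j^2))"
        by (simp add: exp_add[symmetric])
      ultimately show ?thesis by simp
    qed
    moreover have "exp (real j * (-1)) = exp (-1) ^ j" by (simp only: exp_of_nat_mult)
    ultimately have "2^j * exp (- (a * real j^2)) \<le> exp (-1) ^ j" by simp
    then show ?thesis by simp
  qed
  have "norm (C * (2 * exp (- (a * real j^2 / (real j + 1)))) + C * 2^(j+1) * (2 * exp (- (a * real j^2))))
      = C * (2 * exp (- (a * real j^2 / (real j + 1)))) + 2 * C * (2^(j+1) * exp (- (a * real j^2)))"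
  proof -
    have "0 \<le> C * (2 * exp (- (a * real j^2 / (real j + 1)))) + C * 2^(j+1) * (2 * exp (- (a * real j^2)))"
      using C by (intro add_nonneg_nonneg mult_nonneg_nonneg) auto
    then have "norm (C * (2 * exp (- (a * real j^2 / (real j + 1)))) + C * 2^(j+1) * (2 * exp (- (a * real j^2))))
       = C * (2 * exp (- (a * real j^2 / (real j + 1)))) + C * 2^(j+1) * (2 * exp (- (a * real j^2)))" by simp
    then show ?thesis by (simp add: mult_ac)
  qed
  also have "\<dots> \<le> C * (2 * (exp a * exp (-a) ^ j)) + 2 * C * (2 * exp (-1) ^ j)"
    using t1 t2 C by (intro add_mono mult_left_mono) auto
  also have "\<dots> = 2 * C * exp a * exp (-a) ^ j + 4 * C * exp (-1) ^ j" by simp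
  finally show "norm (C * (2 * exp (- (a * real j^2 / (real j + 1)))) + C * 2^(j+1) * (2 * exp (- (a * real j^2))))
      \<le> 2 * C * exp a * exp (-a) ^ j + 4 * C * exp (-1) ^ j" .
qed



lemma card_block: "card {(2::nat)^j..2^(j+1)} \<le> 2^(j+1)"
proof -
  have "card {(2::nat)^j..2^(j+1)} = 2^(j+1) + 1 - 2^j" by simp
  also have "\<dots> \<le> 2^(j+1)" by (simp add: Suc_le_eq)
  finally show ?thesis .
qed

lemma AE_events:
  fixes X :: "nat \<Rightarrow> 'a \<Rightarrow> 'd::finite \<times> bool"
  assumes E: "is_erw M ((2 * real CARD('d) + 1) / (4 * real CARD('d))) X"
  shows "AE \<omega> in M. \<forall>r::nat. eventually (\<lambda>j. \<forall>i::'d.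
            \<bar>Mv i (2^j) (\<lambda>k. X k \<omega>) - Mv i 1 (\<lambda>k. X k \<omega>)\<bar> < real j / (real r + 1) \<and>
            (\<forall>k\<in>{2^j..2^(j+1)}. \<bar>Mv i k (\<lambda>k. X k \<omega>) - Mv i (2^j) (\<lambda>k. X k \<omega>)\<bar> < real j / (real r + 1))) sequentially"
  unfolding AE_all_countable
proof
  fix r :: nat
  interpret prob_space M using E unfolding is_erw_def by auto
  define t where "t j = real j / (real r + 1)" for j :: nat
  have t0: "t j \<ge> 0" for j unfolding t_def by simp
  define A where "A i j = {\<omega>\<in>space M. \<bar>Mv i (2^j) (\<lambda>k. X k \<omega>) - Mv i 1 (\<lambda>k. X k \<omega>)\<bar> \<ge> t j}" for i :: 'd and j :: nat
  define B where "B i j k = {\<omega>\<in>space M. \<bar>Mv i k (\<lambda>k. X k \<omega>) - Mv i (2^j) (\<lambda>k. X k \<omega>)\<bar> \<ge> t j}" for i :: 'd and j k :: nat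
  define Ev where "Ev j = (\<Union>i. A i j) \<union> (\<Union>i. \<Union>k\<in>{2^j..2^(j+1)}. B i j k)" for j
  have VA: "9/4 * (real j + 1) > 0" "(\<Sum>k\<in>{1..<(2::nat)^j}. (3 / (2 * gam (Suc k)))^2) \<le> 9/4 * (real j + 1)" for j
    using V_init[of j] by auto
  have VB: "(\<Sum>k\<in>{(2::nat)^j..<k}. (3 / (2 * gam (Suc k)))^2) \<le> 9/4" if "k \<in> {2^j..2^(j+1)}" for j k
    using V_block[of k j] that by simp
  have A_sets: "A i j \<in> sets M" for i j
    unfolding A_def by (rule tail(1)[OF E _ _ VA t0]) auto
  have A_meas: "measure M (A i j) \<le> 2 * exp (- (t j ^ 2) / (2 * (9/4 * (real j + 1))))" for i j
    unfolding A_def by (rule tail(2)[OF E _ _ VA t0]) auto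
  have B_sets: "B i j k \<in> sets M" if "k \<in> {2^j..2^(j+1)}" for i j k
    unfolding B_def by (rule tail(1)[OF E _ _ _ VB[OF that] t0]) (use that in auto)
  have B_meas: "measure M (B i j k) \<le> 2 * exp (- (t j ^ 2) / (2 * (9/4)))" if "k \<in> {2^j..2^(j+1)}" for i j k
    unfolding B_def by (rule tail(2)[OF E _ _ _ VB[OF that] t0]) (use that in auto)
  have Ev_sets: "Ev j \<in> sets M" for j
    unfolding Ev_def using A_sets B_sets by (intro sets.Un sets.finite_UN) auto
  define a where "a = 2 * (1 / (real r + 1))^2 / 9"
  have a0: "a > 0" unfolding a_def by simp
  define C where "C = real CARD('d)"
  have C0: "C \<ge> 0" unfolding C_def by simp
  have ea: "t j ^ 2 / (2 * (9/4 * (real j + 1))) = a * real j^2 / (real j + 1)" for j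
  proof -
    have p: "real r + 1 \<noteq> 0" "real j + 1 \<noteq> 0" by simp_all
    show ?thesis unfolding t_def a_def using p by (simp add: field_split_simps power2_eq_square)
  qed
  have eb: "t j ^ 2 / (2 * (9/4)) = a * real j^2" for j
    unfolding t_def a_def by (simp add: field_simps power2_eq_square)
  have Ev_meas: "measure M (Ev j) \<le> C * (2 * exp (- (a * real j^2 / (real j + 1)))) + C * 2^(j+1) * (2 * exp (- (a * real j^2)))" for j
  proof -
    have "measure M (Ev j) \<le> measure M (\<Union>i. A i j) + measure M (\<Union>i. \<Union>k\<in>{2^j..2^(j+1)}. B i j k)"
      unfolding Ev_def using A_sets B_sets by (intro measure_Un_le sets.finite_UN) auto
    also have "measure M (\<Union>i. A i j) \<le> (\<Sum>i\<in>UNIV. measure M (A i j))"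
      using A_sets by (intro measure_UNION_le) auto
    also have "\<dots> \<le> (\<Sum>i\<in>(UNIV::'d set). 2 * exp (- (a * real j^2 / (real j + 1))))"
      using A_meas ea by (intro sum_mono) (metis minus_divide_left)
    also have "\<dots> = C * (2 * exp (- (a * real j^2 / (real j + 1))))" unfolding C_def by simp
    also have "measure M (\<Union>i. \<Union>k\<in>{2^j..2^(j+1)}. B i j k) \<le> (\<Sum>i\<in>UNIV. measure M (\<Union>k\<in>{2^j..2^(j+1)}. B i j k))"
      using B_sets by (intro measure_UNION_le sets.finite_UN) auto
    also have "\<dots> \<le> (\<Sum>i\<in>(UNIV::'d set). \<Sum>k\<in>{(2::nat)^j..2^(j+1)}. measure M (B i j k))"
      using B_sets by (intro sum_mono measure_UNION_le) auto
    also have "\<dots> \<le> (\<Sum>i\<in>(UNIV::'d set). \<Sum>k\<in>{(2::nat)^j..2^(j+1)}. 2 * exp (- (a * real j^2)))"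
      using B_meas eb by (intro sum_mono) (metis minus_divide_left)
    also have "\<dots> = C * (real (card {(2::nat)^j..2^(j+1)}) * (2 * exp (- (a * real j^2))))"
      unfolding C_def by simp
    also have "\<dots> \<le> C * (2^(j+1) * (2 * exp (- (a * real j^2))))"
    proof -
      have "real (card {(2::nat)^j..2^(j+1)}) \<le> 2^(j+1)"
        using card_block[of j] by (metis of_nat_le_iff of_nat_numeral of_nat_power)
      then show ?thesis using C0 by (intro mult_left_mono mult_right_mono) auto
    qed
    finally show ?thesis by (simp add: mult_ac)
  qed
  have summ: "summable (\<lambda>j. measure M (Ev j))"
  proof (rule summable_comparison_test)
    show "\<exists>N. \<forall>n\<ge>N. norm (measure M (Ev n)) \<le> C * (2 * exp (- (a * real n^2 / (real n + 1)))) + C * 2^(n+1) * (2 * exp (- (a * real n^2)))"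
      using Ev_meas by auto
    show "summable (\<lambda>n. C * (2 * exp (- (a * real n^2 / (real n + 1)))) + C * 2^(n+1) * (2 * exp (- (a * real n^2))))"
      by (rule summable_bound[OF a0 C0])
  qed
  have "AE \<omega> in M. eventually (\<lambda>j. \<omega> \<in> space M - Ev j) sequentially"
    by (rule borel_cantelli_AE1[OF Ev_sets _ summ]) (simp add: less_top[symmetric])
  then show "AE \<omega> in M. eventually (\<lambda>j. \<forall>i::'d.
            \<bar>Mv i (2^j) (\<lambda>k. X k \<omega>) - Mv i 1 (\<lambda>k. X k \<omega>)\<bar> < real j / (real r + 1) \<and>
            (\<forall>k\<in>{2^j..2^(j+1)}. \<bar>Mv i k (\<lambda>k. X k \<omega>) - Mv i (2^j) (\<lambda>k. X k \<omega>)\<bar> < real j / (real r + 1))) sequentially"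
  proof (rule AE_mp[OF _ AE_I2], intro impI)
    fix \<omega> assume \<omega>: "\<omega> \<in> space M" and ev: "eventually (\<lambda>j. \<omega> \<in> space M - Ev j) sequentially"
    show "eventually (\<lambda>j. \<forall>i::'d.
            \<bar>Mv i (2^j) (\<lambda>k. X k \<omega>) - Mv i 1 (\<lambda>k. X k \<omega>)\<bar> < real j / (real r + 1) \<and>
            (\<forall>k\<in>{2^j..2^(j+1)}. \<bar>Mv i k (\<lambda>k. X k \<omega>) - Mv i (2^j) (\<lambda>k. X k \<omega>)\<bar> < real j / (real r + 1))) sequentially"
      using ev
    proof (rule eventually_mono)
      fix j assume "\<omega> \<in> space M - Ev j"
      then show "\<forall>i::'d.
            \<bar>Mv i (2^j) (\<lambda>k. X k \<omega>) - Mv i 1 (\<lambda>k. X k \<omega>)\<bar> < real j / (real r + 1) \<and>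
            (\<forall>k\<in>{2^j..2^(j+1)}. \<bar>Mv i k (\<lambda>k. X k \<omega>) - Mv i (2^j) (\<lambda>k. X k \<omega>)\<bar> < real j / (real r + 1))"
        using \<omega> unfolding Ev_def A_def B_def t_def by (auto simp: not_le)
    qed
  qed
qed



lemma sqrt2_le: "sqrt 2 \<le> (3/2::real)"
  by (rule real_le_lsqrt) (auto simp: power2_eq_square)

lemma det_S:
  fixes x :: "nat \<Rightarrow> 'd::finite \<times> bool" and i :: 'd
  assumes H: "\<And>r::nat. eventually (\<lambda>j. \<bar>Mv i (2^j) x - Mv i 1 x\<bar> < real j / (real r + 1) \<and>
      (\<forall>k\<in>{2^j..2^(j+1)}. \<bar>Mv i k x - Mv i (2^j) x\<bar> < real j / (real r + 1))) sequentially"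
  shows "(\<lambda>k. sc i k x / (sqrt (real k) * ln (real k))) \<longlonglongrightarrow> 0"
proof (rule LIMSEQ_I)
  fix e :: real assume e: "e > 0"
  define r where "r = nat \<lceil>24 / e\<rceil>"
  define \<epsilon> where "\<epsilon> = 1 / (real r + 1)"
  have \<epsilon>0: "\<epsilon> > 0" unfolding \<epsilon>_def by simp
  have \<epsilon>e: "\<epsilon> \<le> e / 24"
  proof -
    have "24 / e \<le> real r" unfolding r_def by linarith
    then have "24 / e \<le> real r + 1" by simp
    then have "24 \<le> e * (real r + 1)" using e by (simp add: divide_le_eq mult.commute)
    then show ?thesis unfolding \<epsilon>_def using e by (simp add: field_simps)
  qed
  obtain J where J: "\<And>j. j \<ge> J \<Longrightarrow> \<bar>Mv i (2^j) x - Mv i 1 x\<bar> < real j * \<epsilon> \<and>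
      (\<forall>k\<in>{2^j..2^(j+1)}. \<bar>Mv i k x - Mv i (2^j) x\<bar> < real j * \<epsilon>)"
    using H[of r] unfolding eventually_sequentially \<epsilon>_def by auto
  define K1 where "K1 = nat \<lceil>exp (6 / e)\<rceil>"
  show "\<exists>no. \<forall>k\<ge>no. norm (sc i k x / (sqrt (real k) * ln (real k)) - 0) < e"
  proof (intro exI allI impI)
    fix k assume k: "k \<ge> max (2^J) (max K1 3)"
    have k3: "k \<ge> 3" using k by simp
    have kpos: "real k > 0" using k3 by simp
    have kK1: "real k \<ge> exp (6 / e)" using k unfolding K1_def by linarith
    define L where "L = ln (real k)"
    have L6: "L \<ge> 6 / e" unfolding L_def using ln_mono[OF kK1] by simp
    have "6 / e > 0" using e by simp
    then have L0: "L > 0" using L6 by linarith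
    define s where "s = sqrt (real k)"
    have s0: "s > 0" unfolding s_def using kpos by simp
    obtain j where j: "2^j \<le> k" "k < 2^(j+1)" using ex_power_ivl1[of 2 k] k3 by auto
    have jJ: "j \<ge> J"
    proof (rule ccontr)
      assume "\<not> j \<ge> J"
      then have "j + 1 \<le> J" by simp
      then have "(2::nat)^(j+1) \<le> 2^J" by (intro power_increasing) auto
      then show False using j k by simp
    qed
    have kblock: "k \<in> {2^j..2^(j+1)}" using j by simp
    have c1: "\<bar>Mv i (2^j) x - Mv i 1 x\<bar> < real j * \<epsilon>" and c2: "\<bar>Mv i k x - Mv i (2^j) x\<bar> < real j * \<epsilon>"
      using J[OF jJ] kblock by auto
    have M1: "\<bar>Mv i 1 x\<bar> \<le> 1" unfolding Mv_def gam_1 using abs_sc_le[of i 1 x] by simp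
    have Mk: "\<bar>Mv i k x\<bar> \<le> 1 + 2 * (real j * \<epsilon>)" using c1 c2 M1 unfolding abs_le_iff abs_less_iff by linarith
    have jL: "real j \<le> 3/2 * L"
    proof -
      have "(2::nat)^j \<le> k" by (rule j(1))
      then have "(2::real)^j \<le> real k" by (metis of_nat_le_iff of_nat_numeral of_nat_power)
      then have "ln ((2::real)^j) \<le> L" unfolding L_def by (intro ln_mono) auto
      then have "real j * ln 2 \<le> L" by (simp add: ln_realpow)
      moreover have "real j * (2/3) \<le> real j * ln 2" using ln2_ge_two_thirds by (intro mult_left_mono) auto
      ultimately show ?thesis by linarith
    qed
    have sck: "\<bar>sc i k x\<bar> = gam k * \<bar>Mv i k x\<bar>" unfolding Mv_def using gam_pos[of k]
      by (simp add: abs_div abs_of_pos)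
    have gk: "gam k \<le> sqrt 2 * s" unfolding s_def using gam_le[of k] k3 by (simp add: real_sqrt_mult)
    have "\<bar>sc i k x\<bar> \<le> sqrt 2 * s * (1 + 3 * \<epsilon> * L)"
    proof -
      have "\<bar>sc i k x\<bar> \<le> sqrt 2 * s * (1 + 2 * (real j * \<epsilon>))"
        unfolding sck using gk Mk gam_pos[of k] by (intro mult_mono) auto
      also have "\<dots> \<le> sqrt 2 * s * (1 + 3 * \<epsilon> * L)"
      proof -
        have "real j * \<epsilon> \<le> (3/2 * L) * \<epsilon>" by (rule mult_right_mono[OF jL]) (use \<epsilon>0 in simp)
        then have "1 + 2 * (real j * \<epsilon>) \<le> 1 + 3 * \<epsilon> * L" by (simp add: algebra_simps)
        then show ?thesis using s0 by (intro mult_left_mono) auto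
      qed
      finally show ?thesis .
    qed
    then have "\<bar>sc i k x\<bar> / (s * L) \<le> sqrt 2 * s * (1 + 3 * \<epsilon> * L) / (s * L)"
      using s0 L0 by (intro divide_right_mono) auto
    also have "\<dots> = sqrt 2 * (1 / L + 3 * \<epsilon>)" using s0 L0 by (simp add: field_simps)
    also have "\<dots> \<le> 3/2 * (e / 6 + e / 8)"
    proof (intro mult_mono add_mono sqrt2_le)
      show "1 / L \<le> e / 6" using L6 L0 e by (simp add: field_simps)
      show "3 * \<epsilon> \<le> e / 8" using \<epsilon>e by simp
    qed (use L0 \<epsilon>0 e in auto)
    also have "\<dots> < e" using e by simp
    finally have "\<bar>sc i k x\<bar> / (s * L) < e" .
    then show "norm (sc i k x / (sqrt (real k) * ln (real k)) - 0) < e"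
      unfolding s_def[symmetric] L_def[symmetric] using s0 L0 by (simp add: abs_div abs_of_pos)
  qed
qed

lemma det_G:
  fixes a :: "nat \<Rightarrow> real"
  assumes lim: "(\<lambda>k. a k / (sqrt (real k) * ln (real k))) \<longlonglongrightarrow> 0" and bnd: "\<And>k. \<bar>a k\<bar> \<le> real k"
  shows "(\<lambda>n. (1 / (sqrt (real n) * ln (real n))) * ((1 / real n) * (\<Sum>k\<in>{1..n}. a k))) \<longlonglongrightarrow> 0"
proof (rule LIMSEQ_I)
  fix e :: real assume e: "e > 0"
  define h where "h n = sqrt (real n) * ln (real n)" for n :: nat
  have hmono: "h k \<le> h n" if "1 \<le> k" "k \<le> n" for k n
    unfolding h_def using that by (intro mult_mono) auto
  have hpos: "h n > 0" if "n \<ge> 2" for n unfolding h_def using that by (intro mult_pos_pos) auto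
  obtain K where K: "\<And>k. k \<ge> K \<Longrightarrow> \<bar>a k / h k\<bar> < e / 2"
    using LIMSEQ_D[OF lim, of "e/2"] e unfolding h_def by auto
  define K' where "K' = max K 8"
  have aK: "\<bar>a k\<bar> \<le> e / 2 * h k" if "k \<ge> K'" for k
  proof -
    have "k \<ge> 2" using that unfolding K'_def by simp
    then have hp: "h k > 0" by (rule hpos)
    have "\<bar>a k\<bar> / h k < e / 2" using K[of k] that hp unfolding K'_def by (simp add: abs_div abs_of_pos)
    then show ?thesis using hp by (simp add: divide_less_eq less_imp_le)
  qed
  define N where "N = max K' (nat \<lceil>(2 * real K' / e)^2\<rceil> + 1)"
  show "\<exists>no. \<forall>n\<ge>no. norm ((1 / h n) * ((1 / real n) * (\<Sum>k\<in>{1..n}. a k)) - 0) < e"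
  proof (intro exI allI impI)
    fix n assume n: "n \<ge> N"
    have n8: "n \<ge> 8" and nK: "n \<ge> K'" using n unfolding N_def K'_def by auto
    have np: "real n > 0" using n8 by simp
    have ln1: "ln (real n) \<ge> 1"
    proof -
      have "ln (8::real) \<le> ln (real n)" using n8 by simp
      moreover have "ln (8::real) = 3 * ln 2" using ln_realpow[of 2 3] by simp
      ultimately show ?thesis using ln2_ge_two_thirds by linarith
    qed
    have hn: "h n \<ge> sqrt (real n)" unfolding h_def using ln1 by (simp add: mult_le_cancel_left1)
    have hp: "h n > 0" using hpos[of n] n8 by simp
    have sq: "sqrt (real n) > 2 * real K' / e"
    proof (rule real_less_rsqrt)
      have c: "(2 * real K' / e)^2 \<le> real (nat \<lceil>(2 * real K' / e)^2\<rceil>)" by (rule real_nat_ceiling_ge)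
      have "nat \<lceil>(2 * real K' / e)^2\<rceil> + 1 \<le> n" using n unfolding N_def by simp
      then have "real (nat \<lceil>(2 * real K' / e)^2\<rceil>) + 1 \<le> real n" by (metis of_nat_1 of_nat_add of_nat_le_iff)
      then show "(2 * real K' / e)^2 < real n" using c by linarith
    qed
    have pt: "\<bar>a k\<bar> \<le> real K' + e / 2 * h n" if "k \<in> {1..n}" for k
    proof (cases "k \<ge> K'")
      case True
      then have "\<bar>a k\<bar> \<le> e / 2 * h k" by (rule aK)
      also have "\<dots> \<le> e / 2 * h n" using hmono[of k n] that e by (intro mult_left_mono) auto
      finally show ?thesis by simp
    next
      case False
      then have "\<bar>a k\<bar> \<le> real K'" using bnd[of k] by simp
      moreover have "0 \<le> e / 2 * h n" using e hp by simp
      ultimately show ?thesis by linarith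
    qed
    have "\<bar>\<Sum>k\<in>{1..n}. a k\<bar> \<le> (\<Sum>k\<in>{1..n}. \<bar>a k\<bar>)" by (rule sum_abs)
    also have "\<dots> \<le> (\<Sum>k\<in>{1..n}. real K' + e / 2 * h n)" by (intro sum_mono pt)
    also have "\<dots> = real n * (real K' + e / 2 * h n)" by simp
    finally have S: "\<bar>\<Sum>k\<in>{1..n}. a k\<bar> \<le> real n * (real K' + e / 2 * h n)" .
    have "norm ((1 / h n) * ((1 / real n) * (\<Sum>k\<in>{1..n}. a k)) - 0) = \<bar>\<Sum>k\<in>{1..n}. a k\<bar> / (h n * real n)"
      using hp np by (simp add: abs_mult abs_div)
    also have "\<dots> \<le> real n * (real K' + e / 2 * h n) / (h n * real n)"
      using S hp np by (intro divide_right_mono) auto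
    also have "\<dots> = real K' / h n + e / 2" using hp np by (simp add: field_simps)
    also have "\<dots> < e"
    proof -
      have "real K' / h n \<le> real K' / sqrt (real n)"
        using hn np hp by (intro divide_left_mono) auto
      also have "\<dots> < e / 2"
        using sq e np by (simp add: divide_less_eq field_simps)
      finally have "real K' / h n < e / 2" .
      then show ?thesis by linarith
    qed
    finally show "norm ((1 / h n) * ((1 / real n) * (\<Sum>k\<in>{1..n}. a k)) - 0) < e" .
  qed
qed



lemma G_component:
  "((1 / (sqrt (real n) * ln (real n))) *\<^sub>R erw_G X n \<omega>) $ i
   = (1 / (sqrt (real n) * ln (real n))) * ((1 / real n) * (\<Sum>k\<in>{1..n}. sc i k (\<lambda>k. X k \<omega>)))"
  unfolding erw_G_def erw_S_def sc_def by simp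

theorem theorem2p4:
  fixes M :: "'a measure" and X :: "nat \<Rightarrow> 'a \<Rightarrow> 'd::finite \<times> bool"
  assumes "is_erw M ((2 * real CARD('d) + 1) / (4 * real CARD('d))) X"
  shows "AE \<omega> in M. ((\<lambda>n. (1 / (sqrt (real n) * ln (real n))) *\<^sub>R erw_G X n \<omega>) \<longlongrightarrow> 0) sequentially"
proof (rule AE_mp[OF AE_events[OF assms] AE_I2], intro impI)
  fix \<omega> assume H: "\<forall>r::nat. eventually (\<lambda>j. \<forall>i::'d.
            \<bar>Mv i (2^j) (\<lambda>k. X k \<omega>) - Mv i 1 (\<lambda>k. X k \<omega>)\<bar> < real j / (real r + 1) \<and>
            (\<forall>k\<in>{2^j..2^(j+1)}. \<bar>Mv i k (\<lambda>k. X k \<omega>) - Mv i (2^j) (\<lambda>k. X k \<omega>)\<bar> < real j / (real r + 1))) sequentially"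
  show "((\<lambda>n. (1 / (sqrt (real n) * ln (real n))) *\<^sub>R erw_G X n \<omega>) \<longlongrightarrow> 0) sequentially"
  proof (rule vec_tendstoI)
    fix i :: 'd
    have Hi: "eventually (\<lambda>j. \<bar>Mv i (2^j) (\<lambda>k. X k \<omega>) - Mv i 1 (\<lambda>k. X k \<omega>)\<bar> < real j / (real r + 1) \<and>
      (\<forall>k\<in>{2^j..2^(j+1)}. \<bar>Mv i k (\<lambda>k. X k \<omega>) - Mv i (2^j) (\<lambda>k. X k \<omega>)\<bar> < real j / (real r + 1))) sequentially" for r :: nat
      using H[rule_format, of r] by (rule eventually_mono) blast
    have "(\<lambda>k. sc i k (\<lambda>k. X k \<omega>) / (sqrt (real k) * ln (real k))) \<longlonglongrightarrow> 0"
      by (rule det_S[OF Hi])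
    then have "(\<lambda>n. (1 / (sqrt (real n) * ln (real n))) * ((1 / real n) * (\<Sum>k\<in>{1..n}. sc i k (\<lambda>k. X k \<omega>)))) \<longlonglongrightarrow> 0"
      by (rule det_G) (rule abs_sc_le)
    then show "((\<lambda>n. ((1 / (sqrt (real n) * ln (real n))) *\<^sub>R erw_G X n \<omega>) $ i) \<longlongrightarrow> (0::real^'d) $ i) sequentially"
      unfolding G_component by simp
  qed
qed

end
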